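(* Let $\mathcal R_1=\{(0^m1^m,2^m):m\ge0\}\subseteq\{0,1\}^*\times\{2\}^*$. For every $\varepsilon>0$, $\mathcal R_1$ can be computed by a probabilistic finite state transducer with probability $1-\varepsilon$. $\mathcal R_1$ cannot be computed by a deterministic finite state transducer.
   Context: A probabilistic finite state transducer (pfst) is a tuple $T=(Q,\Sigma_1,\Sigma_2,V,f,q_0,Q_{\rm acc},Q_{\rm rej})$ with finite state set $Q$, finite input/output alphabets $\Sigma_1,\Sigma_2$, initial state $q_0$, disjoint accepting/rejecting sets $Q_{\rm acc},Q_{\rm rej}\subseteq Q$ (the other states are non-halting). For each $a\in\Sigma_1\cup\{\ddagger,\$\}$ ($\ddagger,\$$ are end markers) there is a stochastic $Q\times Q$ matrix $V_a$ and an output function $f_a:Q\to\Sigma_2^*$; $V_\$$ puts all probability on halting states. On input $v$ the machine reads $\ddagger v\$$; in state $q$ reading $a$ it appends $f_a(q)$ to the output tape and moves to state $p$ with probability $(V_a)_{qp}$; if $p$ is accepting (rejecting) it halts and accepts with the current output (rejects). $T(w|v)$ is the probability of accepting with output $w$ on input $v$. A deterministic finite state transducer (dfst) is a pfst all of whose matrix entries are $0$ or $1$. For $\alpha>1/2$, $T$ computes $\mathcal R\subseteq\Sigma_1^*\times\Sigma_2^*$ with probability $\alpha$ if for all $v,w$: $(v,w)\in\mathcal R\Rightarrow T(w|v)\ge\alpha$ and $(v,w)\notin\mathcal R\Rightarrow T(w|v)\le1-\alpha$. (A dfst computes $\mathcal R$ if it does so with some probability $\alpha>1/2$, equivalently $T(w|v)=1$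 iff $(v,w)\in\mathcal R$.) *)

theory Defs
  imports Complex_Main
begin

text \<open>Tape symbols: an input letter, the left end marker (double dagger) or the right end marker (dollar).\<close>
datatype 'a tsym = Sym 'a | LMark | RMark

text \<open>A (probabilistic) finite state transducer. States are natural numbers; Q is the
(finite) state set. V a q p is the matrix entry (V_a)_{qp}; f a q is the output f_a(q).\<close>
record ('a, 'b) fst =
  states :: "nat set"
  init :: nat
  acc :: "nat set"
  rej :: "nat set"
  trans :: "'a tsym \<Rightarrow> nat \<Rightarrow> nat \<Rightarrow> real"
  out :: "'a tsym \<Rightarrow> nat \<Rightarrow> 'b list"

definition tape_alph :: "'a set \<Rightarrow> 'a tsym set" where
  "tape_alph S = Sym ` S \<union> {LMark, RMark}"

definition pfst :: "('a, 'b) fst \<Rightarrow> 'a set \<Rightarrow> 'b set \<Rightarrow> bool" where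
  "pfst T S1 S2 \<longleftrightarrow>
     finite (states T) \<and> finite S1 \<and> finite S2 \<and>
     init T \<in> states T \<and> acc T \<subseteq> states T \<and> rej T \<subseteq> states T \<and> acc T \<inter> rej T = {} \<and>
     (\<forall>a\<in>tape_alph S1. \<forall>q\<in>states T.
        (\<forall>p. 0 \<le> trans T a q p) \<and> (\<forall>p. p \<notin> states T \<longrightarrow> trans T a q p = 0) \<and>
        (\<Sum>p\<in>states T. trans T a q p) = 1 \<and>
        out T a q \<in> lists S2) \<and>
     (\<forall>q\<in>states T. \<forall>p. trans T RMark q p \<noteq> 0 \<longrightarrow> p \<in> acc T \<union> rej T)"

definition dfst :: "('a, 'b) fst \<Rightarrow> 'a set \<Rightarrow> 'b set \<Rightarrow> bool" where
  "dfst T S1 S2 \<longleftrightarrow> pfst T S1 S2 \<and>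
     (\<forall>a\<in>tape_alph S1. \<forall>q\<in>states T. \<forall>p\<in>states T. trans T a q p \<in> {0, 1})"

text \<open>acc_from T q u xs w: probability that, being in state q with output u written so far
and with xs left to read, the machine halts accepting with output exactly w.\<close>
fun acc_from :: "('a, 'b) fst \<Rightarrow> nat \<Rightarrow> 'b list \<Rightarrow> 'a tsym list \<Rightarrow> 'b list \<Rightarrow> real" where
  "acc_from T q u [] w = 0"
| "acc_from T q u (a # xs) w =
     (\<Sum>p\<in>states T. trans T a q p *
        (if p \<in> acc T then (if u @ out T a q = w then 1 else 0)
         else if p \<in> rej T then 0
         else acc_from T p (u @ out T a q) xs w))"

definition accprob :: "('a, 'b) fst \<Rightarrow> 'b list \<Rightarrow> 'a list \<Rightarrow> real" where
  "accprob T w v = acc_from T (init T) [] (LMark # map Sym v @ [RMark]) w"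

definition computes_with_prob ::
  "('a, 'b) fst \<Rightarrow> 'a set \<Rightarrow> 'b set \<Rightarrow> ('a list \<times> 'b list) set \<Rightarrow> real \<Rightarrow> bool" where
  "computes_with_prob T S1 S2 R \<alpha> \<longleftrightarrow> \<alpha> > 1/2 \<and>
     (\<forall>v\<in>lists S1. \<forall>w\<in>lists S2.
        ((v, w) \<in> R \<longrightarrow> accprob T w v \<ge> \<alpha>) \<and>
        ((v, w) \<notin> R \<longrightarrow> accprob T w v \<le> 1 - \<alpha>))"

definition R1 :: "(nat list \<times> nat list) set" where
  "R1 = {(replicate m 0 @ replicate m 1, replicate m 2) | m. True}"

end

theory Submission
  imports Defs
begin


definition dnext :: "('a, 'b) fst \<Rightarrow> 'a tsym \<Rightarrow> nat \<Rightarrow> nat" where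
  "dnext T a q = (SOME p. p \<in> states T \<and> trans T a q p = 1)"

fun drun :: "('a, 'b) fst \<Rightarrow> nat \<Rightarrow> 'b list \<Rightarrow> 'a tsym list \<Rightarrow> (nat \<times> 'b list) option" where
  "drun T q u [] = Some (q, u)"
| "drun T q u (a # xs) = (if dnext T a q \<in> acc T \<or> dnext T a q \<in> rej T then None
      else drun T (dnext T a q) (u @ out T a q) xs)"

lemma det_step:
  assumes "dfst T S1 S2" "q \<in> states T" "a \<in> tape_alph S1"
  shows "dnext T a q \<in> states T \<and> (\<forall>p\<in>states T. trans T a q p = (if p = dnext T a q then 1 else 0))"
proof -
  have P: "pfst T S1 S2" and D: "\<forall>p\<in>states T. trans T a q p \<in> {0, 1}"
    using assms unfolding dfst_def by auto
  have fin: "finite (states T)" and s1: "(\<Sum>p\<in>states T. trans T a q p) = 1"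
    using P assms(2,3) unfolding pfst_def by auto
  have "(\<Sum>p\<in>states T. trans T a q p) = (\<Sum>p\<in>states T. if trans T a q p = 1 then 1 else 0)"
    using D by (intro sum.cong) auto
  also have "\<dots> = (\<Sum>p\<in>{p\<in>states T. trans T a q p = 1}. 1)"
    using sum.inter_filter[OF fin, of "\<lambda>_. 1::real", symmetric] by simp
  also have "\<dots> = real (card {p\<in>states T. trans T a q p = 1})" by simp
  finally have "card {p\<in>states T. trans T a q p = 1} = 1" using s1 by simp
  then obtain d where d: "{p\<in>states T. trans T a q p = 1} = {d}" by (rule card_1_singletonE)
  have dn: "dnext T a q = d" unfolding dnext_def using d
    by (metis (mono_tags, lifting) mem_Collect_eq singletonD singletonI someI_ex)
  show ?thesis using d D dn by auto
qed

lemma sum_delta_mult: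
  assumes "finite S" "d \<in> S"
  shows "(\<Sum>p\<in>S. (if p = d then 1 else 0) * (G p :: real)) = G d"
proof -
  have "(\<Sum>p\<in>S. (if p = d then 1 else 0) * G p) = (\<Sum>p\<in>S. if p = d then G p else 0)"
    by (intro sum.cong) auto
  also have "\<dots> = G d" using assms by simp
  finally show ?thesis .
qed

lemma acc_step:
  assumes "dfst T S1 S2" "q \<in> states T" "a \<in> tape_alph S1"
  shows "acc_from T q u (a # xs) w = (if dnext T a q \<in> acc T then (if u @ out T a q = w then 1 else 0)
     else if dnext T a q \<in> rej T then 0 else acc_from T (dnext T a q) (u @ out T a q) xs w)"
proof -
  have fin: "finite (states T)" using assms unfolding dfst_def pfst_def by auto
  note ds = det_step[OF assms]
  show ?thesis
    apply (simp only: acc_from.simps)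
    apply (subst sum.cong[OF refl, where h = "\<lambda>p. (if p = dnext T a q then 1 else 0) *
        (if p \<in> acc T then (if u @ out T a q = w then 1 else 0)
         else if p \<in> rej T then 0
         else acc_from T p (u @ out T a q) xs w)"])
    using ds apply simp
    apply (rule sum_delta_mult[OF fin]) using ds by simp
qed

lemma tape_out:
  assumes "pfst T S1 S2" "q \<in> states T" "a \<in> tape_alph S1"
  shows "out T a q \<in> lists S2"
  using assms unfolding pfst_def by auto

lemma run_some:
  assumes "dfst T S1 S2"
  shows "drun T q u xs = Some (q', u') \<Longrightarrow> q \<in> states T \<Longrightarrow> set xs \<subseteq> tape_alph S1 \<Longrightarrow> u \<in> lists S2 \<Longrightarrow>
    q' \<in> states T \<and> u' \<in> lists S2 \<and> acc_from T q u (xs @ ys) w = acc_from T q' u' ys w"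
proof (induction xs arbitrary: q u)
  case Nil
  then show ?case by simp
next
  case (Cons a xs)
  have a: "a \<in> tape_alph S1" using Cons.prems by auto
  have h: "dnext T a q \<notin> acc T" "dnext T a q \<notin> rej T"
    using Cons.prems(1) by (auto split: if_splits)
  have r: "drun T (dnext T a q) (u @ out T a q) xs = Some (q', u')"
    using Cons.prems(1) h by simp
  have o: "out T a q \<in> lists S2" using tape_out assms Cons.prems a unfolding dfst_def by blast
  have IH: "q' \<in> states T \<and> u' \<in> lists S2 \<and> acc_from T (dnext T a q) (u @ out T a q) (xs @ ys) w = acc_from T q' u' ys w"
    using Cons.IH[OF r] det_step[OF assms Cons.prems(2) a] Cons.prems o by auto
  show ?case using IH acc_step[OF assms Cons.prems(2) a, of u "xs @ ys" w] h by simp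
qed

lemma run_none:
  assumes "dfst T S1 S2"
  shows "drun T q u xs = None \<Longrightarrow> q \<in> states T \<Longrightarrow> set xs \<subseteq> tape_alph S1 \<Longrightarrow>
    acc_from T q u (xs @ ys) w = acc_from T q u (xs @ zs) w"
proof (induction xs arbitrary: q u)
  case Nil
  then show ?case by simp
next
  case (Cons a xs)
  have a: "a \<in> tape_alph S1" using Cons.prems by auto
  note ds = det_step[OF assms Cons.prems(2) a]
  show ?case
  proof (cases "dnext T a q \<in> acc T \<or> dnext T a q \<in> rej T")
    case True
    then show ?thesis using acc_step[OF assms Cons.prems(2) a] by auto
  next
    case False
    then have "drun T (dnext T a q) (u @ out T a q) xs = None" using Cons.prems(1) by simp
    then have "acc_from T (dnext T a q) (u @ out T a q) (xs @ ys) w = acc_from T (dnext T a q) (u @ out T a q) (xs @ zs) w"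
      using Cons.IH ds Cons.prems by auto
    then show ?thesis using acc_step[OF assms Cons.prems(2) a] False by simp
  qed
qed

lemma acc_shift: "acc_from T q (u @ e) xs (u @ w) = acc_from T q e xs w"
proof (induction xs arbitrary: q e)
  case (Cons a xs)
  show ?case unfolding acc_from.simps
    by (intro sum.cong refl) (simp add: Cons.IH[of _ "e @ out T a q", simplified])
qed simp

lemma acc_prefix: "acc_from T q u xs w \<noteq> 0 \<Longrightarrow> \<exists>w'. w = u @ w'"
proof (induction xs arbitrary: q u)
  case Nil
  then show ?case by simp
next
  case (Cons a xs)
  then obtain p where "p \<in> states T" and nz: "trans T a q p *
        (if p \<in> acc T then (if u @ out T a q = w then 1 else 0)
         else if p \<in> rej T then 0
         else acc_from T p (u @ out T a q) xs w) \<noteq> 0"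
    by (metis (no_types, lifting) acc_from.simps(2) sum.neutral)
  then show ?case using Cons.IH by (auto split: if_splits) (metis append.assoc)
qed

lemma tape_LMark: "LMark \<in> tape_alph S" and tape_RMark: "RMark \<in> tape_alph S"
  and tape_Sym: "x \<in> S \<Longrightarrow> Sym x \<in> tape_alph S"
  unfolding tape_alph_def by auto

lemma R1_iff: "(v, w) \<in> R1 \<longleftrightarrow> (\<exists>m. v = replicate m 0 @ replicate m 1 \<and> w = replicate m 2)"
  unfolding R1_def by auto

lemma rep01_eq: "replicate a (0::nat) @ replicate b 1 = replicate c 0 @ replicate d 1 \<Longrightarrow> a = c \<and> b = d"
proof -
  assume h: "replicate a (0::nat) @ replicate b 1 = replicate c 0 @ replicate d 1"
  have f0: "length (filter (\<lambda>x. x = 0) (replicate a (0::nat) @ replicate b 1)) = a" for a b by simp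
  have f1: "length (filter (\<lambda>x. x = 1) (replicate a (0::nat) @ replicate b 1)) = b" for a b by simp
  show ?thesis using f0[of a b] f0[of c d] f1[of a b] f1[of c d] h by metis
qed

lemma no_dfst:
  "\<not> (\<exists>T :: (nat, nat) fst. dfst T {0, 1} {2} \<and> (\<exists>\<alpha>. computes_with_prob T {0, 1} {2} R1 \<alpha>))"
proof
  assume "\<exists>T :: (nat, nat) fst. dfst T {0, 1} {2} \<and> (\<exists>\<alpha>. computes_with_prob T {0, 1} {2} R1 \<alpha>)"
  then obtain T :: "(nat, nat) fst" and \<alpha> where D: "dfst T {0, 1} {2}" and C: "computes_with_prob T {0, 1} {2} R1 \<alpha>"
    by blast
  have P: "pfst T {0,1} {2}" using D unfolding dfst_def by auto
  have fin: "finite (states T)" and i0: "init T \<in> states T" using P unfolding pfst_def by auto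
  have ah: "\<alpha> > 1/2" using C unfolding computes_with_prob_def by auto
  have yes: "accprob T w v \<ge> \<alpha>" if "(v, w) \<in> R1" "v \<in> lists {0,1}" "w \<in> lists {2}" for v w
    using C that unfolding computes_with_prob_def by auto
  have no: "accprob T w v \<le> 1 - \<alpha>" if "(v, w) \<notin> R1" "v \<in> lists {0,1}" "w \<in> lists {2}" for v w
    using C that unfolding computes_with_prob_def by auto
  define xs where "xs i = LMark # replicate i (Sym (0::nat))" for i
  have xs_tape: "set (xs i) \<subseteq> tape_alph {0,1}" for i
    unfolding xs_def tape_alph_def by auto
  have tape_eq: "LMark # map Sym (replicate a 0 @ replicate b 1) @ [RMark] = xs a @ (map Sym (replicate b (1::nat)) @ [RMark])" for a b
    unfolding xs_def by simp
  let ?n = "card (states T)"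
  show False
  proof (cases "\<exists>i\<le>?n. drun T (init T) [] (xs i) = None")
    case True
    then obtain i where hi: "drun T (init T) [] (xs i) = None" by blast
    let ?v1 = "replicate i (0::nat) @ replicate i 1"
    let ?v2 = "replicate (Suc i) (0::nat) @ replicate (Suc i) 1"
    let ?w = "replicate i (2::nat)"
    have e2: "LMark # map Sym ?v2 @ [RMark] = xs i @ (Sym 0 # map Sym (replicate (Suc i) (1::nat)) @ [RMark])"
      unfolding xs_def by (simp add: replicate_append_same[symmetric])
    have "accprob T ?w ?v1 = accprob T ?w ?v2"
      unfolding accprob_def apply (subst e2) apply (subst tape_eq)
      by (rule run_none[OF D hi i0 xs_tape])
    moreover have "accprob T ?w ?v1 \<ge> \<alpha>" by (rule yes) (auto simp: R1_iff)
    moreover have "accprob T ?w ?v2 \<le> 1 - \<alpha>"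
    proof (rule no)
      show "(?v2, ?w) \<notin> R1"
      proof
        assume "(?v2, ?w) \<in> R1"
        then obtain m where "?v2 = replicate m 0 @ replicate m 1" "?w = replicate m 2"
          unfolding R1_iff by blast
        then show False using rep01_eq[of "Suc i" "Suc i" m m] by (metis length_replicate n_not_Suc_n)
      qed
    qed auto
    ultimately show False using ah by linarith
  next
    case False
    then have "\<forall>i\<in>{..?n}. \<exists>qu. drun T (init T) [] (xs i) = Some qu" by auto
    define g where "g i = fst (the (drun T (init T) [] (xs i)))" for i
    define h where "h i = snd (the (drun T (init T) [] (xs i)))" for i
    have gh: "drun T (init T) [] (xs i) = Some (g i, h i)" if "i \<le> ?n" for i
      using False that unfolding g_def h_def by auto
    have rs: "g i \<in> states T \<and> h i \<in> lists {2} \<and> acc_from T (init T) [] (xs i @ ys) w = acc_from T (g i) (h i) ys w"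
      if "i \<le> ?n" for i ys w
      using run_some[OF D gh[OF that] i0 xs_tape] by auto
    have "\<not> inj_on g {..?n}"
    proof
      assume "inj_on g {..?n}"
      moreover have "g ` {..?n} \<subseteq> states T" using rs by auto
      ultimately have "card {..?n} \<le> ?n" using card_inj_on_le fin by blast
      then show False by simp
    qed
    then obtain s t where st: "s \<le> ?n" "t \<le> ?n" "s \<noteq> t" "g s = g t"
      unfolding inj_on_def by auto
    have main: "False" if st: "s \<le> ?n" "t \<le> ?n" "s < t" "g s = g t" for s t
    proof -
      let ?rest = "map Sym (replicate s (1::nat)) @ [RMark]"
      let ?v1 = "replicate s (0::nat) @ replicate s 1"
      let ?w1 = "replicate s (2::nat)"
      have a1: "accprob T ?w1 ?v1 = acc_from T (g s) (h s) ?rest ?w1"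
        unfolding accprob_def tape_eq using rs[OF st(1)] by simp
      have y1: "accprob T ?w1 ?v1 \<ge> \<alpha>" by (rule yes) (auto simp: R1_iff)
      then have "acc_from T (g s) (h s) ?rest ?w1 \<noteq> 0" using a1 ah by linarith
      then obtain w'' where w'': "?w1 = h s @ w''" using acc_prefix by blast
      have a1': "acc_from T (g s) [] ?rest w'' = accprob T ?w1 ?v1"
        using a1 acc_shift[of T "g s" "h s" "[]" ?rest w''] w'' by simp
      let ?v2 = "replicate t (0::nat) @ replicate s 1"
      let ?w2 = "h t @ w''"
      have a2: "accprob T ?w2 ?v2 = acc_from T (g t) (h t) ?rest ?w2"
        unfolding accprob_def tape_eq using rs[OF st(2)] by simp
      also have "\<dots> = acc_from T (g s) [] ?rest w''"
        using acc_shift[of T "g t" "h t" "[]" ?rest w''] st(4) by simp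
      finally have "accprob T ?w2 ?v2 \<ge> \<alpha>" using a1' y1 by simp
      moreover have "accprob T ?w2 ?v2 \<le> 1 - \<alpha>"
      proof (rule no)
        show "(?v2, ?w2) \<notin> R1"
        proof
          assume "(?v2, ?w2) \<in> R1"
          then obtain m where "?v2 = replicate m 0 @ replicate m 1"
            unfolding R1_iff by blast
          then have "t = m" "s = m" using rep01_eq[of t s m m] by blast+
          then show False using st(3) by simp
        qed
        have "w'' \<in> lists {2}" proof -
          have "set w'' \<subseteq> set ?w1" using w'' by simp
          then show ?thesis by (auto split: if_splits)
        qed
        then show "?w2 \<in> lists {2}" using rs[OF st(2)] by auto
      qed auto
      ultimately show False using ah by linarith
    qed
    show False
    proof (cases "s < t")
      case True
      then show ?thesis using main st by blast
    next
      case False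
      then show ?thesis using main[of t s] st by auto
    qed
  qed
qed



definition wt :: "nat \<Rightarrow> nat \<Rightarrow> nat \<Rightarrow> nat" where
  "wt k j x = (if x = 0 then j else k - j)"

definition st :: "nat \<Rightarrow> nat \<Rightarrow> nat \<Rightarrow> nat \<Rightarrow> nat" where
  "st k ph j r = 3 + ph + 2 * (r + k * j)"

definition dph :: "nat \<Rightarrow> nat" where "dph q = (q - 3) mod 2"
definition dr :: "nat \<Rightarrow> nat \<Rightarrow> nat" where "dr k q = ((q - 3) div 2) mod k"
definition dj :: "nat \<Rightarrow> nat \<Rightarrow> nat" where "dj k q = ((q - 3) div 2) div k"

definition nxt :: "nat \<Rightarrow> nat tsym \<Rightarrow> nat \<Rightarrow> nat" where
  "nxt k a q = (if q < 3 then 2 else case a of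
      Sym x \<Rightarrow> if x \<le> 1 \<and> dph q \<le> x then st k x (dj k q) ((dr k q + wt k (dj k q) x) mod k) else 2
    | RMark \<Rightarrow> if dr k q = 0 then 1 else 2
    | LMark \<Rightarrow> 2)"

definition outp :: "nat \<Rightarrow> nat tsym \<Rightarrow> nat \<Rightarrow> nat list" where
  "outp k a q = (if q < 3 then [] else case a of
      Sym x \<Rightarrow> if x \<le> 1 \<and> dph q \<le> x then replicate ((dr k q + wt k (dj k q) x) div k) 2 else []
    | _ \<Rightarrow> [])"

definition starts :: "nat \<Rightarrow> nat set" where
  "starts k = (\<lambda>j. st k 0 j 0) ` {..<k}"

definition trn :: "nat \<Rightarrow> nat tsym \<Rightarrow> nat \<Rightarrow> nat \<Rightarrow> real" where
  "trn k a q p = (if q = 0 \<and> a = LMark then (if p \<in> starts k then 1 / real k else 0)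
     else if p = nxt k a q then 1 else 0)"

definition machine :: "nat \<Rightarrow> (nat, nat) fst" where
  "machine k = \<lparr>states = {..<3 + 2 * k * k}, init = 0, acc = {1}, rej = {2}, trans = trn k, out = outp k\<rparr>"

lemma decode:
  assumes "ph \<le> 1" "r < k"
  shows "dph (st k ph j r) = ph" "dr k (st k ph j r) = r" "dj k (st k ph j r) = j"
proof -
  have e: "st k ph j r - 3 = ph + 2 * (r + k * j)" unfolding st_def by simp
  have m: "(ph + 2 * (r + k * j)) mod 2 = ph" proof -
    have "ph = 0 \<or> ph = 1" using assms(1) by linarith
    then show ?thesis by (metis add_cancel_right_right mod_mult_self2 mult.commute mod_less one_less_numeral_iff semiring_norm(76) zero_less_numeral)
  qed
  have d: "(ph + 2 * (r + k * j)) div 2 = r + k * j" using assms(1) by simp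
  have m2: "(r + k * j) mod k = r" "(r + k * j) div k = j" using assms(2) by simp_all
  show "dph (st k ph j r) = ph" unfolding dph_def e m ..
  show "dr k (st k ph j r) = r" unfolding dr_def e d m2 ..
  show "dj k (st k ph j r) = j" unfolding dj_def e d m2 ..
qed

lemma st_bound:
  assumes "ph \<le> 1" "r < k" "j < k"
  shows "st k ph j r < 3 + 2 * k * k"
proof -
  have "r + k * j + 1 \<le> k * (j + 1)" using assms by simp
  also have "\<dots> \<le> k * k" using assms by (intro mult_le_mono2) simp
  finally have "2 * (r + k * j) + 2 \<le> 2 * k * k" by simp
  then show ?thesis unfolding st_def using assms by linarith
qed

lemma dj_bound:
  assumes "q < 3 + 2 * k * k" "k > 0"
  shows "dj k q < k"
proof -
  have "0 < 2 * k * k" using assms by simp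
  then have h: "q - 3 < 2 * k * k" using assms by linarith
  have "q - 3 < k * k * 2" using h by (metis mult.commute mult.assoc)
  then have "(q - 3) div 2 < k * k" by (simp add: div_less_iff_less_mult)
  then show ?thesis unfolding dj_def using assms(2) by (metis div_less_iff_less_mult)
qed

lemma nxt_in:
  assumes "k > 0" "q < 3 + 2 * k * k"
  shows "nxt k a q < 3 + 2 * k * k"
proof -
  have "dj k q < k" using dj_bound assms by blast
  moreover have "(x::nat) < k \<Longrightarrow> x mod k < k" for x using assms by simp
  ultimately show ?thesis unfolding nxt_def using assms st_bound
    by (auto split: tsym.splits simp: mod_less_divisor)
qed

lemma st_ge3: "st k ph j r \<ge> 3" unfolding st_def by simp

lemma inj_starts: "inj_on (\<lambda>j. st k 0 j 0) {..<k}"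
proof (rule inj_onI)
  fix a b assume a: "a \<in> {..<k}" and b: "b \<in> {..<k}" and e: "st k 0 a 0 = st k 0 b 0"
  have k0: "0 < k" using a by simp
  have "a = dj k (st k 0 a 0)" using decode(3)[of 0 0 k a] k0 by simp
  also have "\<dots> = dj k (st k 0 b 0)" by (rule arg_cong[OF e])
  also have "\<dots> = b" using decode(3)[of 0 0 k b] k0 by simp
  finally show "a = b" .
qed

lemma card_starts: "card (starts k) = k"
  unfolding starts_def using card_image[OF inj_starts] by simp

lemma starts_sub: "k > 0 \<Longrightarrow> starts k \<subseteq> {..<3 + 2 * k * k}"
  unfolding starts_def using st_bound by auto

lemma starts_ge3: "p \<in> starts k \<Longrightarrow> p \<ge> 3"
  unfolding starts_def using st_ge3 by auto

lemma machine_pfst: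
  assumes k: "k > 0"
  shows "pfst (machine k) {0, 1} {2}"
proof -
  let ?S = "{..<3 + 2 * k * k}"
  have sum1: "(\<Sum>p\<in>?S. trn k a q p) = 1" if "q \<in> ?S" for a q
  proof (cases "q = 0 \<and> a = LMark")
    case True
    have "(\<Sum>p\<in>?S. trn k a q p) = (\<Sum>p\<in>?S. if p \<in> starts k then 1 / real k else 0)"
      unfolding trn_def using True by simp
    also have "\<dots> = (\<Sum>p\<in>?S \<inter> starts k. 1 / real k)"
      by (rule sum.inter_restrict[symmetric]) simp
    also have "?S \<inter> starts k = starts k" using starts_sub[OF k] by blast
    also have "(\<Sum>p\<in>starts k. 1 / real k) = 1" using card_starts[of k] k by simp
    finally show ?thesis .
  next
    case False
    then have "(\<Sum>p\<in>?S. trn k a q p) = (\<Sum>p\<in>?S. (if p = nxt k a q then 1 else 0) * 1)"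
      by (intro sum.cong refl) (auto simp: trn_def)
    also have "\<dots> = 1" by (rule sum_delta_mult) (use nxt_in k that in auto)
    finally show ?thesis .
  qed
  have outside: "trn k a q p = 0" if "q \<in> ?S" "p \<notin> ?S" for a q p
    using that nxt_in[OF k, of q a] starts_sub[OF k] unfolding trn_def by auto
  have outs: "outp k a q \<in> lists {2}" for a q
    unfolding outp_def by (auto split: tsym.splits)
  have rm: "p \<in> {1} \<union> {2}" if "trn k RMark q p \<noteq> 0" for q p
    using that unfolding trn_def nxt_def by (auto split: if_splits)
  show ?thesis unfolding pfst_def machine_def
    using sum1 outside outs rm by (auto simp: trn_def)
qed

lemma machine_simps: "states (machine k) = {..<3 + 2 * k * k}" "init (machine k) = 0"
  "acc (machine k) = {1}" "rej (machine k) = {2}" "trans (machine k) = trn k" "out (machine k) = outp k"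
  unfolding machine_def by simp_all

lemma machine_step:
  assumes k: "k > 0" and q: "q < 3 + 2 * k * k" and nz: "q \<noteq> 0 \<or> a \<noteq> LMark"
  shows "acc_from (machine k) q u (a # xs) w =
    (if nxt k a q = 1 then (if u @ outp k a q = w then 1 else 0)
     else if nxt k a q = 2 then 0 else acc_from (machine k) (nxt k a q) (u @ outp k a q) xs w)"
proof -
  have "acc_from (machine k) q u (a # xs) w = (\<Sum>p\<in>{..<3 + 2 * k * k}. (if p = nxt k a q then 1 else 0) *
        (if p \<in> {1} then (if u @ outp k a q = w then 1 else 0)
         else if p \<in> {2} then 0
         else acc_from (machine k) p (u @ outp k a q) xs w))"
    unfolding acc_from.simps machine_simps using nz by (intro sum.cong refl) (auto simp: trn_def)
  also have "\<dots> = (if nxt k a q \<in> {1} then (if u @ outp k a q = w then 1 else 0)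
         else if nxt k a q \<in> {2} then 0
         else acc_from (machine k) (nxt k a q) (u @ outp k a q) xs w)"
    by (rule sum_delta_mult) (use nxt_in k q in auto)
  finally show ?thesis by simp
qed

lemma closed_form:
  assumes k: "k > 0" and j: "j < k"
  shows "ph \<le> 1 \<Longrightarrow> r < k \<Longrightarrow> set v \<subseteq> {0, 1} \<Longrightarrow>
    acc_from (machine k) (st k ph j r) u (map Sym v @ [RMark]) w =
    (if sorted (ph # v) \<and> (r + sum_list (map (wt k j) v)) mod k = 0 \<and>
        w = u @ replicate ((r + sum_list (map (wt k j) v)) div k) 2 then 1 else 0)"
proof (induction v arbitrary: ph r u)
  case Nil
  let ?q = "st k ph j r"
  have q: "?q < 3 + 2 * k * k" "?q \<noteq> 0" using st_bound[OF Nil(1,2) j] st_ge3[of k ph j r] by auto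
  have n0: "nxt k RMark ?q = (if dr k ?q = 0 then 1 else 2)" unfolding nxt_def using st_ge3[of k ph j r] by simp
  have n: "nxt k RMark ?q = (if r = 0 then 1 else 2)" by (simp only: n0 decode(2)[OF Nil(1,2)])
  have o: "outp k RMark ?q = []" unfolding outp_def by simp
  show ?case using machine_step[OF k q(1), of RMark u "[]" w] q n o Nil(2) by auto
next
  case (Cons x v)
  let ?q = "st k ph j r"
  have q: "?q < 3 + 2 * k * k" "?q \<noteq> 0" using st_bound[OF Cons(2,3) j] st_ge3[of k ph j r] by auto
  have x: "x \<le> 1" using Cons(4) by auto
  have q3: "\<not> ?q < 3" using st_ge3[of k ph j r] by simp
  have v: "set v \<subseteq> {0, 1}" using Cons(4) by auto
  note dec = decode[OF Cons(2,3)]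
  show ?case
  proof (cases "ph \<le> x")
    case False
    have n: "nxt k (Sym x) ?q = 2" unfolding nxt_def using dec q3 False by simp
    show ?thesis using machine_step[OF k q(1), of "Sym x" u "map Sym v @ [RMark]" w] q n False by simp
  next
    case True
    define A where "A = r + wt k j x"
    define S where "S = sum_list (map (wt k j) v)"
    have n: "nxt k (Sym x) ?q = st k x j (A mod k)" unfolding nxt_def A_def using dec q3 True x by simp
    have o: "outp k (Sym x) ?q = replicate (A div k) 2" unfolding outp_def A_def using dec q3 True x by simp
    have ge: "st k x j (A mod k) \<noteq> 1" "st k x j (A mod k) \<noteq> 2" using st_ge3[of k x j "A mod k"] by auto
    have IH: "acc_from (machine k) (st k x j (A mod k)) (u @ replicate (A div k) 2) (map Sym v @ [RMark]) w =
      (if sorted (x # v) \<and> (A mod k + S) mod k = 0 \<and>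
        w = (u @ replicate (A div k) 2) @ replicate ((A mod k + S) div k) 2 then 1 else 0)"
      unfolding S_def using Cons.IH[OF x _ v] k by simp
    have e1: "(A mod k + S) mod k = (A + S) mod k" by (simp add: mod_add_left_eq)
    have e2: "A div k + (A mod k + S) div k = (A + S) div k"
    proof -
      have "A + S = (A mod k + S) + (A div k) * k" by simp
      then have "(A + S) div k = (A div k) + (A mod k + S) div k" using k by (metis div_mult_self1 add.commute neq0_conv)
      then show ?thesis by simp
    qed
    have e3: "(u @ replicate (A div k) 2) @ replicate ((A mod k + S) div k) 2 = u @ replicate ((A + S) div k) (2::nat)"
      using e2 by (metis append.assoc replicate_add)
    have e4: "sorted (ph # x # v) = sorted (x # v)" using True by (auto intro: order_trans)
    have e5: "r + sum_list (map (wt k j) (x # v)) = A + S" unfolding A_def S_def by simp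
    have "acc_from (machine k) ?q u (map Sym (x # v) @ [RMark]) w =
      acc_from (machine k) (st k x j (A mod k)) (u @ replicate (A div k) 2) (map Sym v @ [RMark]) w"
      using machine_step[OF k q(1), of "Sym x" u "map Sym v @ [RMark]" w] q n o ge by simp
    also have "\<dots> = (if sorted (ph # x # v) \<and> (r + sum_list (map (wt k j) (x # v))) mod k = 0 \<and>
        w = u @ replicate ((r + sum_list (map (wt k j) (x # v))) div k) 2 then 1 else 0)"
      unfolding IH e1 e3 e4 e5 ..
    finally show ?thesis .
  qed
qed


lemma accprob_machine:
  assumes k: "k > 0"
  shows "accprob (machine k) w v =
    (\<Sum>j<k. 1 / real k * acc_from (machine k) (st k 0 j 0) [] (map Sym v @ [RMark]) w)"
proof -
  let ?S = "{..<3 + 2 * k * k}"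
  let ?rest = "map Sym v @ [RMark]"
  have "accprob (machine k) w v = (\<Sum>p\<in>?S. trn k LMark 0 p *
        (if p \<in> {1} then (if [] @ outp k LMark 0 = w then 1 else 0)
         else if p \<in> {2} then 0
         else acc_from (machine k) p ([] @ outp k LMark 0) ?rest w))"
    unfolding accprob_def machine_simps acc_from.simps ..
  also have "\<dots> = (\<Sum>p\<in>?S. if p \<in> starts k then 1 / real k * acc_from (machine k) p [] ?rest w else 0)"
  proof (intro sum.cong refl)
    fix p assume "p \<in> ?S"
    show "trn k LMark 0 p *
        (if p \<in> {1} then (if [] @ outp k LMark 0 = w then 1 else 0)
         else if p \<in> {2} then 0
         else acc_from (machine k) p ([] @ outp k LMark 0) ?rest w) =
      (if p \<in> starts k then 1 / real k * acc_from (machine k) p [] ?rest w else 0)"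
    proof (cases "p \<in> starts k")
      case True
      then have "p \<ge> 3" by (rule starts_ge3)
      then show ?thesis using True by (simp add: trn_def outp_def)
    next
      case False
      then show ?thesis by (simp add: trn_def)
    qed
  qed
  also have "\<dots> = (\<Sum>p\<in>?S \<inter> starts k. 1 / real k * acc_from (machine k) p [] ?rest w)"
    by (rule sum.inter_restrict[symmetric]) simp
  also have "?S \<inter> starts k = starts k" using starts_sub[OF k] by blast
  also have "(\<Sum>p\<in>starts k. 1 / real k * acc_from (machine k) p [] ?rest w) =
      (\<Sum>j<k. 1 / real k * acc_from (machine k) (st k 0 j 0) [] ?rest w)"
    unfolding starts_def by (subst sum.reindex[OF inj_starts]) simp
  finally show ?thesis .
qed

definition c0 :: "nat list \<Rightarrow> nat" where "c0 v = length (filter (\<lambda>x. x = 0) v)"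
definition c1 :: "nat list \<Rightarrow> nat" where "c1 v = length (filter (\<lambda>x. x = 1) v)"

lemma sum_wt: "set v \<subseteq> {0, 1} \<Longrightarrow> sum_list (map (wt k j) v) = j * c0 v + (k - j) * c1 v"
  by (induction v) (auto simp: wt_def c0_def c1_def)

lemma sorted01: "sorted v \<Longrightarrow> set v \<subseteq> {0, 1} \<Longrightarrow> v = replicate (c0 v) 0 @ replicate (c1 v) 1"
proof (induction v)
  case Nil
  then show ?case by (simp add: c0_def c1_def)
next
  case (Cons x v)
  have IH: "v = replicate (c0 v) 0 @ replicate (c1 v) 1" using Cons by auto
  show ?case
  proof (cases "x = 0")
    case True
    then show ?thesis using IH by (simp add: c0_def c1_def)
  next
    case False
    then have x1: "x = 1" using Cons.prems by auto
    then have "\<forall>y\<in>set v. y = 1" using Cons.prems by fastforce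
    then have "c0 v = 0" unfolding c0_def by (auto simp: filter_empty_conv)
    then show ?thesis using IH x1 by (simp add: c0_def c1_def)
  qed
qed

lemma lin_eq:
  fixes j1 j2 k a b :: nat
  assumes "j1 < j2" "j2 \<le> k" "j1 * a + (k - j1) * b = j2 * a + (k - j2) * b"
  shows "a = b"
proof -
  obtain d where d: "j2 = j1 + d" "d > 0" using assms(1) less_imp_add_positive by blast
  obtain e where e: "k = j2 + e" using assms(2) le_Suc_ex by blast
  have "j1 * a + (d + e) * b = (j1 + d) * a + e * b" using assms(3) d e by simp
  then have "d * b = d * a" by (simp add: algebra_simps)
  then show ?thesis using d(2) by simp
qed

lemma part1:
  fixes \<epsilon> :: real
  assumes "0 < \<epsilon>" "\<epsilon> < 1/2"
  shows "\<exists>T :: (nat, nat) fst. pfst T {0, 1} {2} \<and> computes_with_prob T {0, 1} {2} R1 (1 - \<epsilon>)"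
proof -
  define k where "k = nat \<lceil>1 / \<epsilon>\<rceil>"
  have kr: "real k \<ge> 1 / \<epsilon>" unfolding k_def by linarith
  have "1 / \<epsilon> > 0" using assms by simp
  then have k: "k > 0" using kr by linarith
  have k1: "1 \<le> real k * \<epsilon>" using kr assms(1) by (simp add: field_simps)
  have ke: "1 / real k \<le> \<epsilon>" using k1 k by (simp add: field_simps)
  let ?T = "machine k"
  define t where "t v w j = acc_from ?T (st k 0 j 0) [] (map Sym v @ [RMark]) w" for v w j
  have tform: "t v w j = (if sorted v \<and> (j * c0 v + (k - j) * c1 v) mod k = 0 \<and>
        w = replicate ((j * c0 v + (k - j) * c1 v) div k) 2 then 1 else 0)"
    if "j < k" "set v \<subseteq> {0, 1}" for v w j
    unfolding t_def using closed_form[OF k that(1), of 0 0 v "[]" w] k that sum_wt[OF that(2)] by simp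
  have ap: "accprob ?T w v = (\<Sum>j<k. 1 / real k * t v w j)" for v w
    unfolding t_def by (rule accprob_machine[OF k])
  have comp: "computes_with_prob ?T {0, 1} {2} R1 (1 - \<epsilon>)"
    unfolding computes_with_prob_def
  proof (intro conjI ballI)
    show "1 / 2 < 1 - \<epsilon>" using assms by simp
    fix v w assume v: "v \<in> lists {0::nat, 1}" and w: "w \<in> lists {2::nat}"
    have sv: "set v \<subseteq> {0, 1}" using v by auto
    show "(v, w) \<in> R1 \<longrightarrow> 1 - \<epsilon> \<le> accprob ?T w v"
    proof
      assume "(v, w) \<in> R1"
      then obtain m where m: "v = replicate m 0 @ replicate m 1" "w = replicate m 2" unfolding R1_iff by blast
      have cc: "c0 v = m" "c1 v = m" unfolding m c0_def c1_def by simp_all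
      have "t v w j = 1" if "j < k" for j
      proof -
        have "j * m + (k - j) * m = k * m" using that by (simp add: add_mult_distrib[symmetric])
        moreover have "sorted v" unfolding m by (auto simp: sorted_append)
        ultimately show ?thesis using tform[OF that sv] cc m k by simp
      qed
      then have "accprob ?T w v = (\<Sum>j<k. 1 / real k)" unfolding ap by simp
      also have "\<dots> = 1" using k by simp
      finally show "1 - \<epsilon> \<le> accprob ?T w v" using assms by simp
    qed
    show "(v, w) \<notin> R1 \<longrightarrow> accprob ?T w v \<le> 1 - (1 - \<epsilon>)"
    proof
      assume nR: "(v, w) \<notin> R1"
      have t01: "t v w j = 0 \<or> t v w j = 1" if "j < k" for j using tform[OF that sv] by simp
      have uniq: "j1 = j2" if "j1 < k" "j2 < k" "t v w j1 = 1" "t v w j2 = 1" for j1 j2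
      proof (rule ccontr)
        assume ne: "j1 \<noteq> j2"
        define S where "S j = j * c0 v + (k - j) * c1 v" for j
        have h1: "sorted v" "S j1 mod k = 0" "w = replicate (S j1 div k) 2"
          using tform[OF that(1) sv] that(3) unfolding S_def by (auto split: if_splits)
        have h2: "S j2 mod k = 0" "w = replicate (S j2 div k) 2"
          using tform[OF that(2) sv] that(4) unfolding S_def by (auto split: if_splits)
        have "S j1 = k * (S j1 div k)" using h1(2) div_mult_mod_eq[of "S j1" k] by (simp add: mult.commute)
        also have "S j1 div k = S j2 div k" using h1(3) h2(2) by (metis length_replicate)
        also have "k * (S j2 div k) = S j2" using h2(1) div_mult_mod_eq[of "S j2" k] by (simp add: mult.commute)
        finally have eq: "S j1 = S j2" .
        have eq': "j1 * c0 v + (k - j1) * c1 v = j2 * c0 v + (k - j2) * c1 v" using eq unfolding S_def .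
        have cc: "c0 v = c1 v"
        proof (cases "j1 < j2")
          case True
          show ?thesis by (rule lin_eq[OF True _ eq']) (use that(2) in linarith)
        next
          case False
          then have lt: "j2 < j1" using ne by linarith
          show ?thesis by (rule lin_eq[OF lt _ eq'[symmetric]]) (use that(1) in linarith)
        qed
        have vv: "v = replicate (c0 v) 0 @ replicate (c0 v) 1" using sorted01[OF h1(1) sv] cc by metis
        have jk: "j1 + (k - j1) = k" using that(1) by simp
        have "S j1 = (j1 + (k - j1)) * c1 v" unfolding S_def cc by (rule add_mult_distrib[symmetric])
        then have "S j1 = k * c0 v" using jk cc by simp
        then have Sd: "S j1 div k = c0 v" using k by simp
        have "w = replicate (c0 v) 2" using h1(3) Sd by (simp only:)
        then have "(v, w) \<in> R1" using vv unfolding R1_iff by blast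
        then show False using nR by simp
      qed
      show "accprob ?T w v \<le> 1 - (1 - \<epsilon>)"
      proof (cases "\<exists>j0<k. t v w j0 = 1")
        case True
        then obtain j0 where j0: "j0 < k" "t v w j0 = 1" by blast
        have "\<forall>j\<in>{..<k}. 1 / real k * t v w j = (if j = j0 then 1 / real k else 0)"
        proof
          fix j assume j: "j \<in> {..<k}"
          show "1 / real k * t v w j = (if j = j0 then 1 / real k else 0)"
          proof (cases "j = j0")
            case True then show ?thesis using j0 by simp
          next
            case False
            then have "t v w j \<noteq> 1" using uniq[of j j0] j j0 by auto
            then have "t v w j = 0" using t01[of j] j by auto
            then show ?thesis using False by simp
          qed
        qed
        then have "accprob ?T w v = (\<Sum>j<k. if j = j0 then 1 / real k else 0)" unfolding ap
          by (intro sum.cong[OF refl]) blast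
        also have "\<dots> = 1 / real k" using j0 by simp
        finally show ?thesis using ke by simp
      next
        case False
        have "\<forall>j\<in>{..<k}. 1 / real k * t v w j = 0" proof
          fix j assume j: "j \<in> {..<k}"
          then have "t v w j = 0" using t01[of j] False by auto
          then show "1 / real k * t v w j = 0" by simp
        qed
        then have "accprob ?T w v = 0" unfolding ap by simp
        then show ?thesis using assms by simp
      qed
    qed
  qed
  show ?thesis using machine_pfst[OF k] comp by blast
qed


theorem theorem4:
  shows "(\<forall>\<epsilon>::real. 0 < \<epsilon> \<and> \<epsilon> < 1/2 \<longrightarrow>
            (\<exists>T :: (nat, nat) fst. pfst T {0, 1} {2} \<and>
                computes_with_prob T {0, 1} {2} R1 (1 - \<epsilon>)))
       \<and> \<not> (\<exists>T :: (nat, nat) fst. dfst T {0, 1} {2} \<and>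
                (\<exists>\<alpha>. computes_with_prob T {0, 1} {2} R1 \<alpha>))"
  using part1 no_dfst by blast

end
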